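(* For every Bochvar algebra $\mathbf{A}$, the Bochvar algebra $\mathbf{A}_{\mathbb{B}_{\mathbf{A}}}$ is isomorphic to $\mathbf{A}$.
   Context: $\mathbf{WK}^e$ is the three-element algebra on $\{0,\tfrac12,1\}$ of type $\langle\wedge,\vee,\neg,J_2,0,1\rangle$. Its operations are: - $\neg$ swaps $0,1$ and fixes $\tfrac12$; - $\wedge,\vee$ are Boolean on $\{0,1\}$ and return $\tfrac12$ if some argument is $\tfrac12$; - $J_2(1)=1$ and $J_2(\tfrac12)=J_2(0)=0$. Bochvar algebras are the members of $ISP(\mathbf{WK}^e)$. The $\{\wedge,\vee,\neg,0,1\}$-reduct of a Bochvar algebra is canonically a Płonka sum of Boolean algebras $\mathbf{A}_i$ over a join-semilattice $\langle I,\vee,i_0\rangle$, with bottom fibre $\mathbf{A}_{i_0}$. A Bochvar system is a pair $\langle\mathbf{B},\mathbf{I}\rangle$ with $\mathbf{B}$ a Boolean algebra and $I\subseteq B$ containing $1$ and closed under $\wedge$. $\mathbb{B}_{\mathbf{A}}$ is the Bochvar system $\langle\mathbf{A}_{i_0},K\rangle$ with $K=\{J_2(1^{A_i}):i\in I\}$, where $1^{A_i}$ is the top of fibre $\mathbf{A}_i$. For a Bochvar system $\mathbb{B}=\langle\mathbf{B},\mathbf{I}\rangle$, $\mathbf{A}_{\mathbb{B}}$ is the unique Bochvar algebra whose $\{\wedge,\vee,\neg,0,1\}$-reduct is the Płonka sum of the following system: - index semilattice $I$ ordered dually to $\mathbf{B}$ (least element $1$); - fibres $\mathbf{B}/[i)$,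 the quotient by the congruence of the principal filter $[i)$; - maps $p_{ij}(a/[i))=a/[j)$. Its $J_2$ sends $a/[i)$ to the unique element of the bottom fibre $\mathbf{B}/[1)\cong\mathbf{B}$ below $i$ that is congruent to $a$ modulo $[i)$. *)

theory Defs
  imports Main
begin

datatype wk = WZ | WH | WO   (* 0, 1/2, 1 *)

fun wk_neg :: "wk \<Rightarrow> wk" where
  "wk_neg WZ = WO" | "wk_neg WO = WZ" | "wk_neg WH = WH"

fun wk_meet :: "wk \<Rightarrow> wk \<Rightarrow> wk" where
  "wk_meet WH _ = WH" | "wk_meet _ WH = WH"
| "wk_meet WO WO = WO" | "wk_meet _ _ = WZ"

fun wk_join :: "wk \<Rightarrow> wk \<Rightarrow> wk" where
  "wk_join WH _ = WH" | "wk_join _ WH = WH"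
| "wk_join WZ WZ = WZ" | "wk_join _ _ = WO"

fun wk_J2 :: "wk \<Rightarrow> wk" where
  "wk_J2 WO = WO" | "wk_J2 _ = WZ"

record 'a balg =
  carrier :: "'a set"
  meet :: "'a \<Rightarrow> 'a \<Rightarrow> 'a"
  join :: "'a \<Rightarrow> 'a \<Rightarrow> 'a"
  neg :: "'a \<Rightarrow> 'a"
  jay :: "'a \<Rightarrow> 'a"
  zero :: 'a
  one :: 'a

definition is_algebra :: "'a balg \<Rightarrow> bool" where
  "is_algebra A \<longleftrightarrow> zero A \<in> carrier A \<and> one A \<in> carrier A \<and>
     (\<forall>a\<in>carrier A. \<forall>b\<in>carrier A. meet A a b \<in> carrier A \<and> join A a b \<in> carrier A) \<and>
     (\<forall>a\<in>carrier A. neg A a \<in> carrier A \<and> jay A a \<in> carrier A)"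

text \<open>An embedding of A into the power (WK^e)^X (functions compared on X only).\<close>
definition embeds_into_power :: "'a balg \<Rightarrow> 'x set \<Rightarrow> ('a \<Rightarrow> 'x \<Rightarrow> wk) \<Rightarrow> bool" where
  "embeds_into_power A X h \<longleftrightarrow>
     (\<forall>a\<in>carrier A. \<forall>b\<in>carrier A. (\<forall>x\<in>X. h a x = h b x) \<longrightarrow> a = b) \<and>
     (\<forall>a\<in>carrier A. \<forall>b\<in>carrier A. \<forall>x\<in>X.
        h (meet A a b) x = wk_meet (h a x) (h b x) \<and> h (join A a b) x = wk_join (h a x) (h b x)) \<and>
     (\<forall>a\<in>carrier A. \<forall>x\<in>X. h (neg A a) x = wk_neg (h a x) \<and> h (jay A a) x = wk_J2 (h a x)) \<and>
     (\<forall>x\<in>X. h (zero A) x = WZ \<and> h (one A) x = WO)"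

text \<open>Bochvar algebras = ISP(WK^e). An index set of type 'a => wk suffices
  (the set of all homomorphisms A -> WK^e lives there).\<close>
definition bochvar_algebra :: "'a balg \<Rightarrow> bool" where
  "bochvar_algebra A \<longleftrightarrow> is_algebra A \<and>
     (\<exists>(X :: ('a \<Rightarrow> wk) set) h. embeds_into_power A X h)"

record 'a boolalg =
  bcarrier :: "'a set"
  bmeet :: "'a \<Rightarrow> 'a \<Rightarrow> 'a"
  bjoin :: "'a \<Rightarrow> 'a \<Rightarrow> 'a"
  bneg :: "'a \<Rightarrow> 'a"
  bzero :: 'a
  bone :: 'a

type_synonym 'a bochvar_system = "'a boolalg \<times> 'a set"

text \<open>In the Plonka decomposition of the reduct, the top of the fibre containing a
  is a join (neg a); the bottom fibre is the fibre of the constants 0, 1.\<close>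
definition fibre_top :: "'a balg \<Rightarrow> 'a \<Rightarrow> 'a" where
  "fibre_top A a = join A a (neg A a)"

definition bottom_fibre :: "'a balg \<Rightarrow> 'a set" where
  "bottom_fibre A = {a \<in> carrier A. fibre_top A a = one A}"

definition system_of :: "'a balg \<Rightarrow> 'a bochvar_system" where
  "system_of A =
     (\<lparr> bcarrier = bottom_fibre A, bmeet = meet A, bjoin = join A, bneg = neg A,
        bzero = zero A, bone = one A \<rparr>,
      { jay A (fibre_top A a) | a. a \<in> carrier A })"

text \<open>Class of a modulo the principal filter [i): a ~ b iff a meet i = b meet i.\<close>
definition filt_class :: "'a boolalg \<Rightarrow> 'a \<Rightarrow> 'a \<Rightarrow> 'a set" where
  "filt_class B i a = {b \<in> bcarrier B. bmeet B b i = bmeet B a i}"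

definition rep :: "'a set \<Rightarrow> 'a" where
  "rep C = (SOME a. a \<in> C)"

text \<open>Elements are pairs (i, a/[i)). The join of indices i, j in the semilattice
  ordered dually to B is i meet j; transition maps p_ij(a/[i)) = a/[j).\<close>
definition alg_of_system :: "'a bochvar_system \<Rightarrow> ('a \<times> 'a set) balg" where
  "alg_of_system S = (let B = fst S; I = snd S in
     \<lparr> carrier = {(i, filt_class B i a) | i a. i \<in> I \<and> a \<in> bcarrier B},
       meet = (\<lambda>(i, C) (j, D). (bmeet B i j, filt_class B (bmeet B i j) (bmeet B (rep C) (rep D)))),
       join = (\<lambda>(i, C) (j, D). (bmeet B i j, filt_class B (bmeet B i j) (bjoin B (rep C) (rep D)))),
       neg = (\<lambda>(i, C). (i, filt_class B i (bneg B (rep C)))),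
       jay = (\<lambda>(i, C). (bone B, filt_class B (bone B) (bmeet B (rep C) i))),
       zero = (bone B, filt_class B (bone B) (bzero B)),
       one = (bone B, filt_class B (bone B) (bone B)) \<rparr>)"

definition is_iso :: "('a \<Rightarrow> 'b) \<Rightarrow> 'a balg \<Rightarrow> 'b balg \<Rightarrow> bool" where
  "is_iso h A A' \<longleftrightarrow> bij_betw h (carrier A) (carrier A') \<and>
     (\<forall>a\<in>carrier A. \<forall>b\<in>carrier A.
        h (meet A a b) = meet A' (h a) (h b) \<and> h (join A a b) = join A' (h a) (h b)) \<and>
     (\<forall>a\<in>carrier A. h (neg A a) = neg A' (h a) \<and> h (jay A a) = jay A' (h a)) \<and>
     h (zero A) = zero A' \<and> h (one A) = one A'"

end

theory Submission
  imports Defs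
begin

lemma wk_cases_nH: "(w::wk) \<noteq> WH \<Longrightarrow> w = WO \<or> w = WZ"
  by (cases w) auto

lemma wk_meet_H: "wk_meet u v = WH \<Longrightarrow> u = WH \<or> v = WH"
  by (cases u; cases v) auto
lemma wk_join_H: "wk_join u v = WH \<Longrightarrow> u = WH \<or> v = WH"
  by (cases u; cases v) auto

locale bsetup =
  fixes A :: "'a balg" and X :: "('a \<Rightarrow> wk) set" and e :: "'a \<Rightarrow> ('a \<Rightarrow> wk) \<Rightarrow> wk"
  assumes alg: "is_algebra A" and emb: "embeds_into_power A X e"
begin

lemma meet_c[simp]: "a \<in> carrier A \<Longrightarrow> b \<in> carrier A \<Longrightarrow> meet A a b \<in> carrier A"
  using alg unfolding is_algebra_def by blast
lemma join_c[simp]: "a \<in> carrier A \<Longrightarrow> b \<in> carrier A \<Longrightarrow> join A a b \<in> carrier A"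
  using alg unfolding is_algebra_def by blast
lemma neg_c[simp]: "a \<in> carrier A \<Longrightarrow> neg A a \<in> carrier A"
  using alg unfolding is_algebra_def by blast
lemma jay_c[simp]: "a \<in> carrier A \<Longrightarrow> jay A a \<in> carrier A"
  using alg unfolding is_algebra_def by blast
lemma zero_c[simp]: "zero A \<in> carrier A"
  using alg unfolding is_algebra_def by blast
lemma one_c[simp]: "one A \<in> carrier A"
  using alg unfolding is_algebra_def by blast

lemma ext: "a \<in> carrier A \<Longrightarrow> b \<in> carrier A \<Longrightarrow> (\<And>x. x \<in> X \<Longrightarrow> e a x = e b x) \<Longrightarrow> a = b"
  using emb unfolding embeds_into_power_def by blast

lemma e_meet[simp]: "a \<in> carrier A \<Longrightarrow> b \<in> carrier A \<Longrightarrow> x \<in> X \<Longrightarrow> e (meet A a b) x = wk_meet (e a x) (e b x)"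
  using emb unfolding embeds_into_power_def by blast
lemma e_join[simp]: "a \<in> carrier A \<Longrightarrow> b \<in> carrier A \<Longrightarrow> x \<in> X \<Longrightarrow> e (join A a b) x = wk_join (e a x) (e b x)"
  using emb unfolding embeds_into_power_def by blast
lemma e_neg[simp]: "a \<in> carrier A \<Longrightarrow> x \<in> X \<Longrightarrow> e (neg A a) x = wk_neg (e a x)"
  using emb unfolding embeds_into_power_def by blast
lemma e_jay[simp]: "a \<in> carrier A \<Longrightarrow> x \<in> X \<Longrightarrow> e (jay A a) x = wk_J2 (e a x)"
  using emb unfolding embeds_into_power_def by blast
lemma e_zero[simp]: "x \<in> X \<Longrightarrow> e (zero A) x = WZ"
  using emb unfolding embeds_into_power_def by blast
lemma e_one[simp]: "x \<in> X \<Longrightarrow> e (one A) x = WO"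
  using emb unfolding embeds_into_power_def by blast

lemma ft_c[simp]: "a \<in> carrier A \<Longrightarrow> fibre_top A a \<in> carrier A"
  unfolding fibre_top_def by simp
lemma e_ft[simp]: "a \<in> carrier A \<Longrightarrow> x \<in> X \<Longrightarrow> e (fibre_top A a) x = (if e a x = WH then WH else WO)"
  unfolding fibre_top_def by (cases "e a x") auto

lemma bf_iff: "a \<in> bottom_fibre A \<longleftrightarrow> a \<in> carrier A \<and> (\<forall>x\<in>X. e a x \<noteq> WH)"
proof
  assume "a \<in> bottom_fibre A"
  then have "a \<in> carrier A" "fibre_top A a = one A" unfolding bottom_fibre_def by auto
  moreover have "\<forall>x\<in>X. e a x \<noteq> WH"
  proof
    fix x assume x: "x \<in> X"
    have "e (fibre_top A a) x = WO" using \<open>fibre_top A a = one A\<close> x by simp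
    then show "e a x \<noteq> WH" using \<open>a \<in> carrier A\<close> x by (simp split: if_splits)
  qed
  ultimately show "a \<in> carrier A \<and> (\<forall>x\<in>X. e a x \<noteq> WH)" by blast
next
  assume h: "a \<in> carrier A \<and> (\<forall>x\<in>X. e a x \<noteq> WH)"
  then have "fibre_top A a = one A" by (intro ext) auto
  with h show "a \<in> bottom_fibre A" unfolding bottom_fibre_def by auto
qed

definition Ix where "Ix = {jay A (fibre_top A a) | a. a \<in> carrier A}"

lemma Ix_c: "i \<in> Ix \<Longrightarrow> i \<in> carrier A"
  unfolding Ix_def by auto

lemma Ix_nH: "i \<in> Ix \<Longrightarrow> x \<in> X \<Longrightarrow> e i x \<noteq> WH"
  unfolding Ix_def by (auto split: if_splits)

definition T where "T i = fibre_top A (SOME b. b \<in> carrier A \<and> jay A (fibre_top A b) = i)"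

lemma T_props: assumes "i \<in> Ix"
  shows "T i \<in> carrier A" "\<And>x. x \<in> X \<Longrightarrow> e (T i) x = (if e i x = WO then WO else WH)"
proof -
  obtain a where "a \<in> carrier A \<and> jay A (fibre_top A a) = i" using assms unfolding Ix_def by auto
  then have b: "(SOME b. b \<in> carrier A \<and> jay A (fibre_top A b) = i) \<in> carrier A \<and>
     jay A (fibre_top A (SOME b. b \<in> carrier A \<and> jay A (fibre_top A b) = i)) = i"
    by (rule someI)
  then show "T i \<in> carrier A" unfolding T_def by simp
  fix x assume x: "x \<in> X"
  define bb where "bb = (SOME b. b \<in> carrier A \<and> jay A (fibre_top A b) = i)"
  have bb: "bb \<in> carrier A" "i = jay A (fibre_top A bb)" using b unfolding bb_def by auto
  have "e i x = wk_J2 (if e bb x = WH then WH else WO)" using bb x by simp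
  then show "e (T i) x = (if e i x = WO then WO else WH)"
    using bb x unfolding T_def bb_def[symmetric]
    by (cases "e bb x") auto
qed

definition cls where "cls i a = {b \<in> bottom_fibre A. meet A b i = meet A a i}"

lemma rep_props: assumes i: "i \<in> Ix" and a: "a \<in> bottom_fibre A"
  shows "rep (cls i a) \<in> bottom_fibre A" "cls i (rep (cls i a)) = cls i a"
    "\<And>x. x \<in> X \<Longrightarrow> e i x = WO \<Longrightarrow> e (rep (cls i a)) x = e a x"
proof -
  have "a \<in> cls i a" using a unfolding cls_def by auto
  then have r: "rep (cls i a) \<in> cls i a" unfolding rep_def by (rule someI)
  then show rb: "rep (cls i a) \<in> bottom_fibre A" unfolding cls_def by auto
  from r have m: "meet A (rep (cls i a)) i = meet A a i" unfolding cls_def by auto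
  then show "cls i (rep (cls i a)) = cls i a" unfolding cls_def by auto
  fix x assume x: "x \<in> X" and ix: "e i x = WO"
  have "e (meet A (rep (cls i a)) i) x = e (meet A a i) x" using m by simp
  moreover have "e (rep (cls i a)) x \<noteq> WH" "e a x \<noteq> WH" "rep (cls i a) \<in> carrier A" "a \<in> carrier A"
    using rb a x bf_iff by auto
  ultimately show "e (rep (cls i a)) x = e a x" using ix x Ix_c[OF i]
    by (cases "e (rep (cls i a)) x"; cases "e a x") auto
qed

definition H where "H p = meet A (rep (snd p)) (T (fst p))"

lemma H_props: assumes i: "i \<in> Ix" and a: "a \<in> bottom_fibre A"
  shows "H (i, cls i a) \<in> carrier A"
    "\<And>x. x \<in> X \<Longrightarrow> e (H (i, cls i a)) x = (if e i x = WO then e a x else WH)"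
proof -
  have rc: "rep (cls i a) \<in> carrier A" using rep_props(1)[OF i a] bf_iff by auto
  then show "H (i, cls i a) \<in> carrier A" unfolding H_def using T_props(1)[OF i] by simp
  fix x assume x: "x \<in> X"
  have "e (rep (cls i a)) x \<noteq> WH" using rep_props(1)[OF i a] bf_iff x by auto
  then show "e (H (i, cls i a)) x = (if e i x = WO then e a x else WH)"
    unfolding H_def using rc T_props[OF i] x rep_props(3)[OF i a x]
    by (cases "e (rep (cls i a)) x") auto
qed

lemma alg_simps:
  "carrier (alg_of_system (system_of A)) = {(i, cls i a) | i a. i \<in> Ix \<and> a \<in> bottom_fibre A}"
  "meet (alg_of_system (system_of A)) (i, C) (j, D) = (meet A i j, cls (meet A i j) (meet A (rep C) (rep D)))"
  "join (alg_of_system (system_of A)) (i, C) (j, D) = (meet A i j, cls (meet A i j) (join A (rep C) (rep D)))"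
  "neg (alg_of_system (system_of A)) (i, C) = (i, cls i (neg A (rep C)))"
  "jay (alg_of_system (system_of A)) (i, C) = (one A, cls (one A) (meet A (rep C) i))"
  "zero (alg_of_system (system_of A)) = (one A, cls (one A) (zero A))"
  "one (alg_of_system (system_of A)) = (one A, cls (one A) (one A))"
  unfolding alg_of_system_def system_of_def Let_def cls_def filt_class_def Ix_def by auto

lemma bf_meet: "a \<in> bottom_fibre A \<Longrightarrow> b \<in> bottom_fibre A \<Longrightarrow> meet A a b \<in> bottom_fibre A"
  unfolding bf_iff by (auto dest!: wk_meet_H)
lemma bf_join: "a \<in> bottom_fibre A \<Longrightarrow> b \<in> bottom_fibre A \<Longrightarrow> join A a b \<in> bottom_fibre A"
  unfolding bf_iff by (auto dest!: wk_join_H)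
lemma bf_neg: "a \<in> bottom_fibre A \<Longrightarrow> neg A a \<in> bottom_fibre A"
  unfolding bf_iff by (auto dest!: wk_cases_nH)
lemma bf_zero: "zero A \<in> bottom_fibre A"
  unfolding bf_iff by auto
lemma bf_one: "one A \<in> bottom_fibre A"
  unfolding bf_iff by auto
lemma bf_jay: "a \<in> carrier A \<Longrightarrow> jay A a \<in> bottom_fibre A"
  unfolding bf_iff by (auto intro: wk_J2.elims)
lemma Ix_bf: "i \<in> Ix \<Longrightarrow> i \<in> bottom_fibre A"
  unfolding bf_iff using Ix_c Ix_nH by auto

lemma one_Ix: "one A \<in> Ix"
proof -
  have "jay A (fibre_top A (one A)) = one A" by (rule ext) auto
  then show ?thesis unfolding Ix_def by (metis (mono_tags, lifting) mem_Collect_eq one_c)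
qed

lemma meet_Ix: assumes "i \<in> Ix" "j \<in> Ix" shows "meet A i j \<in> Ix"
proof -
  obtain a b where ab: "a \<in> carrier A" "b \<in> carrier A" "i = jay A (fibre_top A a)" "j = jay A (fibre_top A b)"
    using assms unfolding Ix_def by auto
  have "meet A i j = jay A (fibre_top A (meet A a b))"
    by (rule ext) (use ab in \<open>auto split: if_splits dest!: wk_cases_nH\<close>)
  then show ?thesis unfolding Ix_def using ab by auto
qed

lemma rep_c: "i \<in> Ix \<Longrightarrow> a \<in> bottom_fibre A \<Longrightarrow> rep (cls i a) \<in> carrier A"
  using rep_props(1) bf_iff by blast

lemma rep_nH: "i \<in> Ix \<Longrightarrow> a \<in> bottom_fibre A \<Longrightarrow> x \<in> X \<Longrightarrow> e (rep (cls i a)) x \<noteq> WH"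
  using rep_props(1) bf_iff by blast

lemma bf_c: "a \<in> bottom_fibre A \<Longrightarrow> a \<in> carrier A" using bf_iff by blast
lemma bf_nH: "a \<in> bottom_fibre A \<Longrightarrow> x \<in> X \<Longrightarrow> e a x \<noteq> WH" using bf_iff by blast

lemma H_pt: "i \<in> Ix \<Longrightarrow> a \<in> bottom_fibre A \<Longrightarrow> x \<in> X \<Longrightarrow>
   e (H (i, cls i a)) x = (if e i x = WO then e a x else WH)"
  using H_props(2) by blast

lemma iso: "is_iso H (alg_of_system (system_of A)) A"
proof -
  let ?S = "{(i, cls i a) | i a. i \<in> Ix \<and> a \<in> bottom_fibre A}"
  have inj: "inj_on H ?S"
  proof (rule inj_onI, clarify)
    fix i a j b assume i: "i \<in> Ix" and a: "a \<in> bottom_fibre A" and j: "j \<in> Ix" and b: "b \<in> bottom_fibre A"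
      and eq: "H (i, cls i a) = H (j, cls j b)"
    have pt: "(if e i x = WO then e a x else WH) = (if e j x = WO then e b x else WH)" if x: "x \<in> X" for x
      using H_pt[OF i a x] H_pt[OF j b x] eq by simp
    have ij: "i = j"
    proof (rule ext[OF Ix_c[OF i] Ix_c[OF j]])
      fix x assume x: "x \<in> X"
      show "e i x = e j x" using pt[OF x] Ix_nH[OF i x] Ix_nH[OF j x] bf_nH[OF a x] bf_nH[OF b x]
        by (auto split: if_splits dest!: wk_cases_nH)
    qed
    have "meet A a i = meet A b i"
    proof (rule ext)
      fix x assume x: "x \<in> X"
      show "e (meet A a i) x = e (meet A b i) x"
        using pt[OF x] ij Ix_c[OF i] bf_c[OF a] bf_c[OF b] x Ix_nH[OF i x] bf_nH[OF a x] bf_nH[OF b x]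
        by (auto split: if_splits dest!: wk_cases_nH)
    qed (use Ix_c[OF i] bf_c[OF a] bf_c[OF b] in auto)
    then show "i = j \<and> cls i a = cls j b" using ij unfolding cls_def by auto
  qed
  have img: "H ` ?S = carrier A"
  proof
    show "H ` ?S \<subseteq> carrier A" using H_props(1) by auto
    show "carrier A \<subseteq> H ` ?S"
    proof
      fix y assume y: "y \<in> carrier A"
      let ?i = "jay A (fibre_top A y)"
      have i: "?i \<in> Ix" unfolding Ix_def using y by auto
      have a: "jay A y \<in> bottom_fibre A" using bf_jay y by auto
      have "y = H (?i, cls ?i (jay A y))"
      proof (rule ext[OF y H_props(1)[OF i a]])
        fix x assume x: "x \<in> X"
        show "e y x = e (H (?i, cls ?i (jay A y))) x"
          unfolding H_pt[OF i a x] using x y by (cases "e y x") auto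
      qed
      then show "y \<in> H ` ?S" using i a by blast
    qed
  qed
  have ops: "H (meet (alg_of_system (system_of A)) p q) = meet A (H p) (H q) \<and>
             H (join (alg_of_system (system_of A)) p q) = join A (H p) (H q)"
    if p: "p \<in> ?S" and q: "q \<in> ?S" for p q
  proof -
    obtain i a where i: "i \<in> Ix" and a: "a \<in> bottom_fibre A" and pd: "p = (i, cls i a)" using p by blast
    obtain j b where j: "j \<in> Ix" and b: "b \<in> bottom_fibre A" and qd: "q = (j, cls j b)" using q by blast
    let ?c = "rep (cls i a)" and ?d = "rep (cls j b)"
    have c: "?c \<in> bottom_fibre A" and d: "?d \<in> bottom_fibre A" using rep_props(1) i a j b by auto
    have ij: "meet A i j \<in> Ix" using meet_Ix i j by auto
    have m1: "H (meet A i j, cls (meet A i j) (meet A ?c ?d)) = meet A (H p) (H q)"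
    proof (rule ext[OF H_props(1)[OF ij bf_meet[OF c d]]])
      show "meet A (H p) (H q) \<in> carrier A" using H_props(1) i a j b pd qd by auto
      fix x assume x: "x \<in> X"
      show "e (H (meet A i j, cls (meet A i j) (meet A ?c ?d))) x = e (meet A (H p) (H q)) x"
        unfolding H_pt[OF ij bf_meet[OF c d] x] pd qd
        using e_meet[OF H_props(1)[OF i a] H_props(1)[OF j b] x] H_pt[OF i a x] H_pt[OF j b x]
          rep_props(3)[OF i a x] rep_props(3)[OF j b x] Ix_c[OF i] Ix_c[OF j] bf_c[OF c] bf_c[OF d] x
          Ix_nH[OF i x] Ix_nH[OF j x] bf_nH[OF a x] bf_nH[OF b x]
        by (auto split: if_splits dest!: wk_cases_nH)
    qed
    have m2: "H (meet A i j, cls (meet A i j) (join A ?c ?d)) = join A (H p) (H q)"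
    proof (rule ext[OF H_props(1)[OF ij bf_join[OF c d]]])
      show "join A (H p) (H q) \<in> carrier A" using H_props(1) i a j b pd qd by auto
      fix x assume x: "x \<in> X"
      show "e (H (meet A i j, cls (meet A i j) (join A ?c ?d))) x = e (join A (H p) (H q)) x"
        unfolding H_pt[OF ij bf_join[OF c d] x] pd qd
        using e_join[OF H_props(1)[OF i a] H_props(1)[OF j b] x] H_pt[OF i a x] H_pt[OF j b x]
          rep_props(3)[OF i a x] rep_props(3)[OF j b x] Ix_c[OF i] Ix_c[OF j] bf_c[OF c] bf_c[OF d] x
          Ix_nH[OF i x] Ix_nH[OF j x] bf_nH[OF a x] bf_nH[OF b x]
        by (auto split: if_splits dest!: wk_cases_nH)
    qed
    show ?thesis using m1 m2 unfolding pd qd alg_simps by simp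
  qed
  have ops1: "H (neg (alg_of_system (system_of A)) p) = neg A (H p) \<and>
             H (jay (alg_of_system (system_of A)) p) = jay A (H p)"
    if p: "p \<in> ?S" for p
  proof -
    obtain i a where i: "i \<in> Ix" and a: "a \<in> bottom_fibre A" and pd: "p = (i, cls i a)" using p by blast
    let ?c = "rep (cls i a)"
    have c: "?c \<in> bottom_fibre A" using rep_props(1) i a by auto
    have m1: "H (i, cls i (neg A ?c)) = neg A (H p)"
    proof (rule ext[OF H_props(1)[OF i bf_neg[OF c]]])
      show "neg A (H p) \<in> carrier A" using H_props(1) i a pd by auto
      fix x assume x: "x \<in> X"
      show "e (H (i, cls i (neg A ?c))) x = e (neg A (H p)) x"
        unfolding H_pt[OF i bf_neg[OF c] x] pd
        using e_neg[OF H_props(1)[OF i a] x] H_pt[OF i a x]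
          rep_props(3)[OF i a x] Ix_c[OF i] bf_c[OF c] x
          Ix_nH[OF i x] bf_nH[OF a x]
        by (auto split: if_splits dest!: wk_cases_nH)
    qed
    have ci: "meet A ?c i \<in> bottom_fibre A" using bf_meet[OF c Ix_bf[OF i]] .
    have m2: "H (one A, cls (one A) (meet A ?c i)) = jay A (H p)"
    proof (rule ext[OF H_props(1)[OF one_Ix ci]])
      show "jay A (H p) \<in> carrier A" using H_props(1) i a pd by auto
      fix x assume x: "x \<in> X"
      show "e (H (one A, cls (one A) (meet A ?c i))) x = e (jay A (H p)) x"
        unfolding H_pt[OF one_Ix ci x] pd
        using e_jay[OF H_props(1)[OF i a] x] H_pt[OF i a x]
          rep_props(3)[OF i a x] Ix_c[OF i] bf_c[OF c] x
          Ix_nH[OF i x] bf_nH[OF a x] bf_nH[OF c x]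
        by (auto split: if_splits dest!: wk_cases_nH)
    qed
    show ?thesis using m1 m2 unfolding pd alg_simps by simp
  qed
  have z: "H (zero (alg_of_system (system_of A))) = zero A"
    unfolding alg_simps
    by (rule ext[OF H_props(1)[OF one_Ix bf_zero]]) (auto simp: H_pt[OF one_Ix bf_zero])
  have o: "H (one (alg_of_system (system_of A))) = one A"
    unfolding alg_simps
    by (rule ext[OF H_props(1)[OF one_Ix bf_one]]) (auto simp: H_pt[OF one_Ix bf_one])
  show ?thesis unfolding is_iso_def
    using inj img ops ops1 z o unfolding alg_simps(1) bij_betw_def by blast
qed

end

theorem theorem3p5:
  fixes A :: "'a balg"
  assumes "bochvar_algebra A"
  shows "\<exists>h. is_iso h (alg_of_system (system_of A)) A"
proof -
  obtain X :: "('a \<Rightarrow> wk) set" and h where "is_algebra A" "embeds_into_power A X h"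
    using assms unfolding bochvar_algebra_def by blast
  then interpret bsetup A X h by unfold_locales
  show ?thesis using iso by blast
qed

end
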